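(* Let $E$ be a Banach lattice. The following assertions are equivalent: (1) Each positive operator from $E$ into $\ell_1$ is uaw-Dunford–Pettis. (2) The norm of the dual Banach lattice $E'$ is order continuous.
   Context: All operators are continuous linear operators. A net $(x_\alpha)$ in a Banach lattice $E$ is uaw-convergent to $x$ (written $x_\alpha\xrightarrow{uaw}x$) if $|x_\alpha-x|\wedge u\to 0$ weakly for every $u\in E_+$. An operator $T$ from a Banach lattice $E$ into a Banach space $X$ is uaw-Dunford–Pettis if for every norm bounded sequence $(x_n)$ in $E$ with $x_n\xrightarrow{uaw}0$ one has $\|Tx_n\|\to 0$. *)

theory Defs
  imports "HOL-Analysis.Analysis"
begin

class banach_lattice = banach + ordered_real_vector + lattice +
  assumes lattice_norm: "sup x (- x) \<le> sup y (- y) \<Longrightarrow> norm x \<le> norm y"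

definition lmod :: "'a::banach_lattice \<Rightarrow> 'a" where
  "lmod x = sup x (- x)"

definition dual_le :: "('a::banach_lattice \<Rightarrow>\<^sub>L real) \<Rightarrow> ('a \<Rightarrow>\<^sub>L real) \<Rightarrow> bool" where
  "dual_le f g \<longleftrightarrow> (\<forall>x::'a. 0 \<le> x \<longrightarrow> blinfun_apply f x \<le> blinfun_apply g x)"

text \<open>Order continuity of the norm of E': whenever f_\<alpha> \<down> 0 in E'
  (a downward directed set with infimum 0), the norms tend to 0.\<close>
definition dual_norm_order_continuous :: "'a::banach_lattice itself \<Rightarrow> bool" where
  "dual_norm_order_continuous (_::'a itself) \<longleftrightarrow>
     (\<forall>D::('a \<Rightarrow>\<^sub>L real) set.
        D \<noteq> {} \<and>
        (\<forall>f\<in>D. \<forall>g\<in>D. \<exists>h\<in>D. dual_le h f \<and> dual_le h g) \<and>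
        (\<forall>f\<in>D. dual_le 0 f) \<and>
        (\<forall>h. (\<forall>f\<in>D. dual_le h f) \<longrightarrow> dual_le h 0)
        \<longrightarrow> (\<forall>e>0. \<exists>f\<in>D. norm f < e))"

definition uaw_null :: "(nat \<Rightarrow> 'a::banach_lattice) \<Rightarrow> bool" where
  "uaw_null x \<longleftrightarrow> (\<forall>u::'a. 0 \<le> u \<longrightarrow>
      (\<forall>f::'a \<Rightarrow>\<^sub>L real. (\<lambda>n. blinfun_apply f (inf (lmod (x n)) u)) \<longlonglongrightarrow> 0))"

text \<open>The space \<ell>_1 is represented by sequences nat \<Rightarrow> real with summable
  absolute values, with norm l1norm and coordinatewise order.\<close>
definition l1norm :: "(nat \<Rightarrow> real) \<Rightarrow> real" where
  "l1norm s = (\<Sum>n. \<bar>s n\<bar>)"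

definition l1_operator :: "('a::banach_lattice \<Rightarrow> nat \<Rightarrow> real) \<Rightarrow> bool" where
  "l1_operator T \<longleftrightarrow>
     (\<forall>x. summable (\<lambda>n. \<bar>T x n\<bar>)) \<and>
     (\<forall>x y. T (x + y) = (\<lambda>n. T x n + T y n)) \<and>
     (\<forall>c x. T (c *\<^sub>R x) = (\<lambda>n. c * T x n)) \<and>
     (\<exists>C. \<forall>x. l1norm (T x) \<le> C * norm x)"

definition positive_l1_operator :: "('a::banach_lattice \<Rightarrow> nat \<Rightarrow> real) \<Rightarrow> bool" where
  "positive_l1_operator T \<longleftrightarrow> l1_operator T \<and> (\<forall>x. 0 \<le> x \<longrightarrow> (\<forall>n. 0 \<le> T x n))"

definition uaw_DP_l1 :: "('a::banach_lattice \<Rightarrow> nat \<Rightarrow> real) \<Rightarrow> bool" where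
  "uaw_DP_l1 T \<longleftrightarrow> (\<forall>x::nat \<Rightarrow> 'a. bounded (range x) \<and> uaw_null x \<longrightarrow>
      (\<lambda>n. l1norm (T (x n))) \<longlonglongrightarrow> 0)"

end

theory Submission
  imports Defs "HOL-Library.Lattice_Algebras"
begin

subclass (in banach_lattice) lattice_ab_group_add ..

lemma lmod_ge0: "0 \<le> lmod (x::'a::banach_lattice)"
proof -
  have "x + (- x) \<le> sup x (-x) + sup x (-x)" by (intro add_mono) auto
  then show ?thesis unfolding lmod_def by simp
qed

lemma lmod_pos: "0 \<le> (x::'a::banach_lattice) \<Longrightarrow> lmod x = x"
  unfolding lmod_def by (rule sup_absorb1) (meson neg_le_0_iff_le order_trans)

lemma x_le_lmod: "(x::'a::banach_lattice) \<le> lmod x" and mx_le_lmod: "- x \<le> lmod x"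
  unfolding lmod_def by auto

lemma lmod_lmod: "lmod (lmod (x::'a::banach_lattice)) = lmod x"
  by (simp add: lmod_pos lmod_ge0)

lemma norm_lmod: "norm (lmod (x::'a::banach_lattice)) = norm x"
proof -
  have e: "sup (lmod x) (- lmod x) = sup x (- x)" using lmod_lmod[of x] unfolding lmod_def .
  have "norm (lmod x) \<le> norm x" by (rule lattice_norm) (simp add: e)
  moreover have "norm x \<le> norm (lmod x)" by (rule lattice_norm) (simp add: e)
  ultimately show ?thesis by simp
qed

lemma norm_le_lmod: "lmod (x::'a::banach_lattice) \<le> lmod y \<Longrightarrow> norm x \<le> norm y"
  using lattice_norm unfolding lmod_def by blast

lemma norm_mono_pos: "0 \<le> (a::'a::banach_lattice) \<Longrightarrow> a \<le> b \<Longrightarrow> norm a \<le> norm b"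
  by (rule norm_le_lmod) (simp add: lmod_pos)

lemma lmod_le: "(x::'a::banach_lattice) \<le> y \<Longrightarrow> - x \<le> y \<Longrightarrow> lmod x \<le> y"
  unfolding lmod_def by simp

lemma norm_le_pos_bound: "(x::'a::banach_lattice) \<le> y \<Longrightarrow> - x \<le> y \<Longrightarrow> norm x \<le> norm y"
proof -
  assume "x \<le> y" "- x \<le> y"
  then have "lmod x \<le> y" by (rule lmod_le)
  moreover have "0 \<le> y" using lmod_ge0[of x] \<open>lmod x \<le> y\<close> by simp
  ultimately show ?thesis by (intro norm_le_lmod) (simp add: lmod_pos)
qed

lemma lmod_triangle: "lmod ((x::'a::banach_lattice) + y) \<le> lmod x + lmod y"
  apply (rule lmod_le)
  using add_mono[OF x_le_lmod x_le_lmod, of x y] add_mono[OF mx_le_lmod mx_le_lmod, of x y]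
  by (auto simp: algebra_simps)

lemma diff_le_self_pos: "0 \<le> (b::'a::ordered_ab_group_add) \<Longrightarrow> a - b \<le> a"
  by simp

lemma diff_le_imp: "(a::'a::ordered_ab_group_add) - d \<le> e \<Longrightarrow> a \<le> d + e"
  by (simp add: diff_le_eq add.commute)

lemma inf_add_le: 
  fixes a b c :: "'a::banach_lattice"
  assumes "0 \<le> a" "0 \<le> b" "0 \<le> c"
  shows "inf (a + b) c \<le> inf a c + inf b c"
proof -
  let ?x = "inf (a + b) c"
  have "?x - inf a c = ?x + sup (- a) (- c)" by (rule diff_inf_eq_sup)
  also have "\<dots> = sup (?x - a) (?x - c)" by (simp add: add_sup_distrib_left)
  also have "\<dots> \<le> b"
  proof (rule sup_least)
    have "?x \<le> a + b" by (rule inf_le1)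
    then show "?x - a \<le> b" by (simp add: algebra_simps)
    have "?x \<le> c" by (rule inf_le2)
    also have "c \<le> b + c" using assms(2) by (simp add: add_increasing)
    finally show "?x - c \<le> b" by (simp add: algebra_simps)
  qed
  finally have 1: "?x - inf a c \<le> b" .
  have "0 \<le> inf a c" using assms by simp
  then have "?x - inf a c \<le> ?x" by (rule diff_le_self_pos)
  also have "?x \<le> c" by (rule inf_le2)
  finally have "?x - inf a c \<le> c" .
  with 1 have "?x - inf a c \<le> inf b c" by (rule le_infI)
  then show ?thesis by (rule diff_le_imp)
qed

lemma inf_add_le2:
  fixes a b c :: "'a::banach_lattice"
  assumes "0 \<le> c"
  shows "inf a (b + c) \<le> inf a b + c"
proof -
  have "inf a (b + c) \<le> inf (a + c) (b + c)" using assms by (auto intro: le_infI1 simp: add_increasing2)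
  also have "\<dots> = inf a b + c" by (simp add: add_inf_distrib_right)
  finally show ?thesis .
qed

lemma disj_add_sup:
  fixes a b :: "'a::banach_lattice"
  assumes "inf a b = 0"
  shows "a + b = sup a b"
  using add_eq_inf_sup[of a b] assms by simp

lemma scaleR_inf:
  fixes a b :: "'a::banach_lattice"
  assumes "0 \<le> t"
  shows "t *\<^sub>R inf a b = inf (t *\<^sub>R a) (t *\<^sub>R b)"
proof (cases "t = 0")
  case True then show ?thesis by simp
next
  case False
  with assms have t: "0 < t" by simp
  have 1: "t *\<^sub>R inf a b \<le> inf (t *\<^sub>R a) (t *\<^sub>R b)"
    using assms by (auto intro: scaleR_left_mono)
  have "inverse t *\<^sub>R inf (t *\<^sub>R a) (t *\<^sub>R b) \<le> a"
    using scaleR_left_mono[OF inf_le1[of "t *\<^sub>R a" "t *\<^sub>R b"], of "inverse t"] t by simp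
  moreover have "inverse t *\<^sub>R inf (t *\<^sub>R a) (t *\<^sub>R b) \<le> b"
    using scaleR_left_mono[OF inf_le2[of "t *\<^sub>R a" "t *\<^sub>R b"], of "inverse t"] t by simp
  ultimately have "inverse t *\<^sub>R inf (t *\<^sub>R a) (t *\<^sub>R b) \<le> inf a b" by simp
  from scaleR_left_mono[OF this, of t] t have "inf (t *\<^sub>R a) (t *\<^sub>R b) \<le> t *\<^sub>R inf a b" by simp
  with 1 show ?thesis by (rule order.antisym)
qed

lemma pos_decomp: "(x::'a::banach_lattice) = sup x 0 - sup (- x) 0"
proof -
  have "x = pprt x + nprt x" by (rule prts)
  moreover have "nprt x = - sup (- x) 0" unfolding nprt_def
    using neg_inf_eq_sup[of x 0] by simp
  ultimately show ?thesis unfolding pprt_def by simp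
qed

lemma pp_le_lmod: "sup (x::'a::banach_lattice) 0 \<le> lmod x"
  using lmod_ge0[of x] x_le_lmod[of x] by simp

lemma np_le_lmod: "sup (- (x::'a::banach_lattice)) 0 \<le> lmod x"
  using lmod_ge0[of x] mx_le_lmod[of x] by simp

lemma norm_pp: "norm (sup (x::'a::banach_lattice) 0) \<le> norm x"
  using norm_mono_pos[OF _ pp_le_lmod, of x] norm_lmod[of x] by simp

lemma norm_np: "norm (sup (- (x::'a::banach_lattice)) 0) \<le> norm x"
  using norm_mono_pos[OF _ np_le_lmod, of x] norm_lmod[of x] by simp

lemma sup_diff_zero: "sup ((a::'a::banach_lattice) - w) 0 = a - inf a w"
proof -
  have "a - inf a w = a + sup (- a) (- w)" by (rule diff_inf_eq_sup)
  also have "\<dots> = sup (a + - a) (a + - w)" by (rule add_sup_distrib_left)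
  finally show ?thesis by (simp add: sup_commute)
qed

lemma inf_add_le3:
  fixes a b c :: "'a::banach_lattice"
  assumes "0 \<le> c"
  shows "inf (b + c) a \<le> inf b a + c"
  using inf_add_le2[OF assms, of a b] by (simp add: inf_commute)

lemma le_add_diff1: "(x::'a::ordered_ab_group_add) \<le> y + L \<Longrightarrow> x - y \<le> L"
  by (simp add: diff_le_eq add.commute)

lemma le_add_diff2: "(y::'a::ordered_ab_group_add) \<le> x + L \<Longrightarrow> - (x - y) \<le> L"
  by (simp add: algebra_simps)

lemma scaleR_sup:
  fixes a b :: "'a::banach_lattice"
  assumes "0 \<le> t"
  shows "t *\<^sub>R sup a b = sup (t *\<^sub>R a) (t *\<^sub>R b)"
proof -
  have "t *\<^sub>R sup a b = t *\<^sub>R (- inf (- a) (- b))" by (subst sup_eq_neg_inf) (rule refl)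
  also have "\<dots> = - (t *\<^sub>R inf (- a) (- b))" by (rule scaleR_minus_right)
  also have "\<dots> = - inf (t *\<^sub>R (- a)) (t *\<^sub>R (- b))" using scaleR_inf[OF assms] by metis
  also have "\<dots> = - inf (- (t *\<^sub>R a)) (- (t *\<^sub>R b))" by simp
  also have "\<dots> = sup (t *\<^sub>R a) (t *\<^sub>R b)" by (subst sup_eq_neg_inf[of "t *\<^sub>R a"]) (rule refl)
  finally show ?thesis .
qed

lemma birkhoff_inf: "lmod (inf (a::'a::banach_lattice) c - inf b c) \<le> lmod (a - b)"
proof (rule lmod_le)
  have "a \<le> b + lmod (a - b)" using x_le_lmod[of "a - b"] by (simp add: algebra_simps)
  then have "inf a c \<le> inf (b + lmod (a - b)) c" by (rule inf_mono) simp
  also have "\<dots> \<le> inf b c + lmod (a - b)" by (rule inf_add_le3[OF lmod_ge0])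
  finally show "inf a c - inf b c \<le> lmod (a - b)" by (rule le_add_diff1)
  have "b \<le> a + lmod (a - b)" using mx_le_lmod[of "a - b"] by (simp add: algebra_simps)
  then have "inf b c \<le> inf (a + lmod (a - b)) c" by (rule inf_mono) simp
  also have "\<dots> \<le> inf a c + lmod (a - b)" by (rule inf_add_le3[OF lmod_ge0])
  finally show "- (inf a c - inf b c) \<le> lmod (a - b)" by (rule le_add_diff2)
qed

lemma pos_limit:
  fixes y :: "nat \<Rightarrow> 'a::banach_lattice"
  assumes lim: "y \<longlonglongrightarrow> s" and ev: "eventually (\<lambda>n. 0 \<le> y n) sequentially"
  shows "0 \<le> s"
proof -
  have "(\<lambda>n. norm (s - y n)) \<longlonglongrightarrow> 0"
  proof -
    have "(\<lambda>n. y n - s) \<longlonglongrightarrow> 0" using LIM_zero[OF lim] .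
    then have "(\<lambda>n. norm (y n - s)) \<longlonglongrightarrow> 0" by (rule tendsto_norm_zero)
    then show ?thesis by (simp add: norm_minus_commute)
  qed
  moreover have "eventually (\<lambda>n. norm (inf s 0) \<le> norm (s - y n)) sequentially"
    using ev
  proof eventually_elim
    case (elim n)
    then have "inf (y n) 0 = 0" by (simp add: inf_absorb2)
    then have "norm (inf s 0) = norm (inf s 0 - inf (y n) 0)" by simp
    also have "\<dots> \<le> norm (s - y n)" by (rule norm_le_lmod) (rule order_trans[OF birkhoff_inf], simp add: lmod_def)
    finally show ?case .
  qed
  ultimately have "norm (inf s 0) \<le> 0"
    using tendsto_le[OF trivial_limit_sequentially _ tendsto_const] by blast
  then have "inf s 0 = 0" by simp
  then show ?thesis by (metis inf.absorb_iff2)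
qed

lemma inf_pp_np: "inf (sup (t::'a::banach_lattice) 0) (sup (- t) 0) = 0"
proof -
  let ?P = "sup t 0" and ?Q = "sup (- t) 0"
  have "?P + ?Q = sup (t + ?Q) (0 + ?Q)" by (rule add_sup_distrib_right)
  also have "t + ?Q = sup 0 t" by (simp add: add_sup_distrib_left)
  finally have "?P + ?Q = sup ?P ?Q" by (simp add: sup_commute)
  with add_eq_inf_sup[of ?P ?Q] show ?thesis by simp
qed

lemma disj_lemma:
  fixes a b :: "'a::banach_lattice"
  assumes a: "0 \<le> a" and b: "0 \<le> b" and l: "0 < l" and m: "0 < m" and lm: "1 \<le> l * m"
  shows "inf (sup (a - l *\<^sub>R b) 0) (sup (b - m *\<^sub>R a) 0) = 0"
proof -
  let ?c = "inf (sup (a - l *\<^sub>R b) 0) (sup (b - m *\<^sub>R a) 0)"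
  let ?t = "a - l *\<^sub>R b"
  define k where "k = min 1 l"
  have k: "0 < k" "k \<le> 1" "k \<le> l" using l unfolding k_def by auto
  have c0: "0 \<le> ?c" by simp
  have "k *\<^sub>R ?c \<le> ?c" using scaleR_right_mono[OF k(2) c0] by simp
  also have "?c \<le> sup ?t 0" by simp
  finally have 1: "k *\<^sub>R ?c \<le> sup ?t 0" .
  have "k *\<^sub>R ?c \<le> l *\<^sub>R ?c" using scaleR_right_mono[OF k(3) c0] .
  also have "\<dots> \<le> l *\<^sub>R sup (b - m *\<^sub>R a) 0" using l by (intro scaleR_left_mono) auto
  also have "\<dots> = sup (l *\<^sub>R b - (l * m) *\<^sub>R a) 0"
  proof -
    have "l *\<^sub>R sup (b - m *\<^sub>R a) 0 = sup (l *\<^sub>R (b - m *\<^sub>R a)) (l *\<^sub>R 0)"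
      using l by (intro scaleR_sup) simp
    then show ?thesis by (simp add: algebra_simps)
  qed
  also have "\<dots> \<le> sup (- ?t) 0"
  proof -
    have "a \<le> (l * m) *\<^sub>R a" using scaleR_right_mono[OF lm a] by simp
    then have "l *\<^sub>R b - (l * m) *\<^sub>R a \<le> - ?t" by (simp add: algebra_simps)
    then show ?thesis by (rule sup_mono) simp
  qed
  finally have 2: "k *\<^sub>R ?c \<le> sup (- ?t) 0" .
  from 1 2 have "k *\<^sub>R ?c \<le> 0" using inf_pp_np[of ?t] le_infI by metis
  then have "inverse k *\<^sub>R (k *\<^sub>R ?c) \<le> 0" using k scaleR_left_mono[of "k *\<^sub>R ?c" 0 "inverse k"] by simp
  then have "?c \<le> 0" using k by simp
  with c0 show ?thesis by (rule order.antisym[rotated])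
qed

lemma inf_sum_le:
  fixes a :: "nat \<Rightarrow> 'a::banach_lattice"
  assumes "finite I" "0 \<le> b" "\<And>i. i \<in> I \<Longrightarrow> 0 \<le> a i"
  shows "inf (sum a I) b \<le> (\<Sum>i\<in>I. inf (a i) b)"
  using assms
proof (induction I rule: finite_induct)
  case empty
  then show ?case by (simp add: inf_absorb1)
next
  case (insert i F)
  have "inf (sum a (insert i F)) b = inf (a i + sum a F) b" using insert by simp
  also have "\<dots> \<le> inf (a i) b + inf (sum a F) b"
    using insert by (intro inf_add_le) (auto intro: sum_nonneg)
  also have "\<dots> \<le> inf (a i) b + (\<Sum>j\<in>F. inf (a j) b)"
    using insert by (intro add_left_mono) auto
  finally show ?case using insert by simp
qed

lemma disj_sum_le:
  fixes a :: "nat \<Rightarrow> 'a::banach_lattice"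
  assumes "finite I" "\<And>i j. i \<in> I \<Longrightarrow> j \<in> I \<Longrightarrow> i \<noteq> j \<Longrightarrow> inf (a i) (a j) = 0"
    "\<And>i. i \<in> I \<Longrightarrow> 0 \<le> a i" "\<And>i. i \<in> I \<Longrightarrow> a i \<le> u" "0 \<le> u"
  shows "sum a I \<le> u"
  using assms
proof (induction I rule: finite_induct)
  case empty
  then show ?case by simp
next
  case (insert i F)
  have S: "sum a F \<le> u" using insert by auto
  have S0: "0 \<le> sum a F" using insert by (auto intro: sum_nonneg)
  have "inf (sum a F) (a i) \<le> (\<Sum>j\<in>F. inf (a j) (a i))"
    using insert by (intro inf_sum_le) auto
  also have "\<dots> = 0" using insert by (intro sum.neutral) (metis insertCI)
  finally have "inf (sum a F) (a i) = 0" using S0 insert by (intro order.antisym) auto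
  then have "sum a F + a i = sup (sum a F) (a i)" by (rule disj_add_sup)
  also have "\<dots> \<le> u" using S insert by auto
  finally show ?case using insert by (simp add: add.commute)
qed

lemma disj_sums:
  fixes a :: "nat \<Rightarrow> 'a::banach_lattice"
  assumes "finite I" "finite J" "I \<inter> J = {}"
    "\<And>i j. i \<noteq> j \<Longrightarrow> inf (a i) (a j) = 0" "\<And>i. 0 \<le> a i"
  shows "inf (sum a I) (sum a J) = 0"
proof -
  have "inf (sum a I) (sum a J) \<le> (\<Sum>i\<in>I. inf (a i) (sum a J))"
    using assms by (intro inf_sum_le sum_nonneg) auto
  also have "\<dots> \<le> (\<Sum>i\<in>I. 0)"
  proof (rule sum_mono)
    fix i assume i: "i \<in> I"
    have "inf (a i) (sum a J) = inf (sum a J) (a i)" by (rule inf_commute)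
    also have "\<dots> \<le> (\<Sum>j\<in>J. inf (a j) (a i))" using assms by (intro inf_sum_le) auto
    also have "\<dots> = 0"
    proof (intro sum.neutral ballI)
      fix j assume "j \<in> J"
      with i assms(3) have "j \<noteq> i" by auto
      with assms(4) show "inf (a j) (a i) = 0" by blast
    qed
    finally show "inf (a i) (sum a J) \<le> 0" .
  qed
  finally show ?thesis using assms by (intro order.antisym) (auto intro: sum_nonneg)
qed

lemma disj_scale:
  fixes a b :: "'a::banach_lattice"
  assumes "inf a b = 0" "0 \<le> a" "0 \<le> b" "0 \<le> s" "0 \<le> t"
  shows "inf (s *\<^sub>R a) (t *\<^sub>R b) = 0"
proof -
  let ?T = "max s t"
  have "inf (s *\<^sub>R a) (t *\<^sub>R b) \<le> inf (?T *\<^sub>R a) (?T *\<^sub>R b)"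
    using assms by (intro inf_mono scaleR_right_mono) auto
  also have "\<dots> = ?T *\<^sub>R inf a b" using assms by (intro scaleR_inf[symmetric]) auto
  finally show ?thesis using assms by (intro order.antisym) (auto intro: scaleR_nonneg_nonneg)
qed

definition posf :: "('a::banach_lattice \<Rightarrow>\<^sub>L real) \<Rightarrow> bool" where
  "posf f \<longleftrightarrow> (\<forall>x. 0 \<le> x \<longrightarrow> 0 \<le> blinfun_apply f x)"

lemma posf_dual_le: "posf f \<longleftrightarrow> dual_le 0 f"
  unfolding posf_def dual_le_def by simp

lemma posf_mono: "posf f \<Longrightarrow> x \<le> y \<Longrightarrow> blinfun_apply f x \<le> blinfun_apply f y"
  unfolding posf_def using blinfun.diff_right[of f y x]
  by (metis diff_ge_0_iff_ge)

lemma posf_abs: "posf f \<Longrightarrow> \<bar>blinfun_apply f x\<bar> \<le> blinfun_apply f (lmod x)"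
proof -
  assume f: "posf f"
  have "blinfun_apply f x \<le> blinfun_apply f (lmod x)" by (rule posf_mono[OF f x_le_lmod])
  moreover have "- blinfun_apply f x \<le> blinfun_apply f (lmod x)"
    using posf_mono[OF f mx_le_lmod, of x] by (simp add: blinfun.minus_right)
  ultimately show ?thesis by simp
qed

lemma lmod_scale_le:
  fixes a :: "'a::banach_lattice"
  assumes "0 \<le> a" "\<bar>c\<bar> \<le> 1"
  shows "lmod (c *\<^sub>R a) \<le> a"
proof (rule lmod_le)
  have "c *\<^sub>R a \<le> 1 *\<^sub>R a" using assms by (intro scaleR_right_mono) auto
  then show "c *\<^sub>R a \<le> a" by simp
  have "(- c) *\<^sub>R a \<le> 1 *\<^sub>R a" using assms by (intro scaleR_right_mono) auto
  then show "- (c *\<^sub>R a) \<le> a" by simp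
qed

lemma lmod_sum_le:
  fixes a :: "nat \<Rightarrow> 'a::banach_lattice"
  shows "lmod (sum a I) \<le> (\<Sum>i\<in>I. lmod (a i))"
proof (induction I rule: infinite_finite_induct)
  case (infinite A)
  then show ?case by (simp add: lmod_def)
next
  case empty
  then show ?case by (simp add: lmod_def)
next
  case (insert i F)
  have "lmod (sum a (insert i F)) = lmod (a i + sum a F)" using insert by simp
  also have "\<dots> \<le> lmod (a i) + lmod (sum a F)" by (rule lmod_triangle)
  also have "\<dots> \<le> lmod (a i) + (\<Sum>j\<in>F. lmod (a j))" using insert by (intro add_left_mono)
  finally show ?case using insert by simp
qed

lemma disj_weak_null:
  fixes a :: "nat \<Rightarrow> 'a::banach_lattice" and F :: "'a \<Rightarrow>\<^sub>L real"
  assumes disj: "\<And>i j. i \<noteq> j \<Longrightarrow> inf (a i) (a j) = 0"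
    and pos: "\<And>i. 0 \<le> a i" and le: "\<And>i. a i \<le> u"
  shows "(\<lambda>n. blinfun_apply F (a n)) \<longlonglongrightarrow> 0"
proof -
  have u0: "0 \<le> u" using pos[of 0] le[of 0] by simp
  have bnd: "(\<Sum>i<n. \<bar>blinfun_apply F (a i)\<bar>) \<le> norm F * norm u" for n
  proof -
    define c where "c i = sgn (blinfun_apply F (a i))" for i
    have "(\<Sum>i<n. \<bar>blinfun_apply F (a i)\<bar>) = (\<Sum>i<n. blinfun_apply F (c i *\<^sub>R a i))"
      unfolding c_def by (intro sum.cong) (auto simp: blinfun.scaleR_right sgn_if)
    also have "\<dots> = blinfun_apply F (\<Sum>i<n. c i *\<^sub>R a i)" by (simp add: blinfun.sum_right)
    also have "\<dots> \<le> norm F * norm (\<Sum>i<n. c i *\<^sub>R a i)"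
      using norm_blinfun[of F] by (metis abs_le_D1 real_norm_def)
    also have "norm (\<Sum>i<n. c i *\<^sub>R a i) \<le> norm u"
    proof (rule norm_le_lmod)
      have "lmod (\<Sum>i<n. c i *\<^sub>R a i) \<le> (\<Sum>i<n. lmod (c i *\<^sub>R a i))" by (rule lmod_sum_le)
      also have "\<dots> \<le> (\<Sum>i<n. a i)"
        by (intro sum_mono lmod_scale_le pos) (simp add: c_def abs_sgn_eq)
      also have "\<dots> \<le> u" using disj pos le u0 by (intro disj_sum_le) auto
      also have "u = lmod u" using u0 by (simp add: lmod_pos)
      finally show "lmod (\<Sum>i<n. c i *\<^sub>R a i) \<le> lmod u" .
    qed
    then have "norm F * norm (\<Sum>i<n. c i *\<^sub>R a i) \<le> norm F * norm u"
      by (intro mult_left_mono) auto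
    finally show ?thesis .
  qed
  have "summable (\<lambda>i. \<bar>blinfun_apply F (a i)\<bar>)"
    by (rule summableI_nonneg_bounded[OF _ bnd]) auto
  then have "(\<lambda>i. \<bar>blinfun_apply F (a i)\<bar>) \<longlonglongrightarrow> 0" by (rule summable_LIMSEQ_zero)
  then show ?thesis by (simp add: tendsto_rabs_zero_iff)
qed

lemma cone_ext:
  fixes p :: "'a::banach_lattice \<Rightarrow> real"
  assumes add: "\<And>a b. 0 \<le> a \<Longrightarrow> 0 \<le> b \<Longrightarrow> p (a + b) = p a + p b"
    and hom: "\<And>c a. 0 \<le> c \<Longrightarrow> 0 \<le> a \<Longrightarrow> p (c *\<^sub>R a) = c * p a"
    and bnd: "\<And>a. 0 \<le> a \<Longrightarrow> \<bar>p a\<bar> \<le> K * norm a"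
    and K: "0 \<le> K"
  shows "\<exists>h. \<forall>a. 0 \<le> a \<longrightarrow> blinfun_apply h a = p a"
proof -
  define P where "P x = sup x (0::'a)" for x
  define N where "N x = sup (- x) (0::'a)" for x
  have PN: "x = P x - N x" "0 \<le> P x" "0 \<le> N x" for x
    unfolding P_def N_def using pos_decomp[of x] by auto
  define q where "q x = p (P x) - p (N x)" for x
  have key: "q (a - b) = p a - p b" if "0 \<le> a" "0 \<le> b" for a b
  proof -
    have "a + N (a - b) = b + P (a - b)" using PN(1)[of "a - b"] by (simp add: algebra_simps)
    then have "p (a + N (a - b)) = p (b + P (a - b))" by simp
    then have "p a + p (N (a - b)) = p b + p (P (a - b))" using add that PN by simp
    then show ?thesis unfolding q_def by simp
  qed
  have p0: "p 0 = 0" using hom[of 0 0] by simp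
  have lin: "bounded_linear q"
  proof (rule bounded_linear_intro)
    fix x y
    have "x + y = (P x + P y) - (N x + N y)" using PN(1)[of x] PN(1)[of y] by (simp add: algebra_simps)
    then have "q (x + y) = p (P x + P y) - p (N x + N y)" using key PN by (metis add_nonneg_nonneg)
    also have "\<dots> = q x + q y" unfolding q_def using add PN by simp
    finally show "q (x + y) = q x + q y" .
  next
    fix r x
    show "q (r *\<^sub>R x) = r *\<^sub>R q x"
    proof (cases "0 \<le> r")
      case True
      have "r *\<^sub>R x = r *\<^sub>R P x - r *\<^sub>R N x" using PN(1)[of x] by (metis scaleR_right_diff_distrib)
      then have "q (r *\<^sub>R x) = p (r *\<^sub>R P x) - p (r *\<^sub>R N x)" using key PN True
        by (metis scaleR_nonneg_nonneg)
      also have "\<dots> = r * p (P x) - r * p (N x)" using hom PN True by simp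
      also have "\<dots> = r *\<^sub>R q x" unfolding q_def by (simp add: algebra_simps)
      finally show ?thesis .
    next
      case False
      have "r *\<^sub>R x = (- r) *\<^sub>R N x - (- r) *\<^sub>R P x" using PN(1)[of x]
        by (metis minus_diff_eq scaleR_minus_left scaleR_right_diff_distrib scaleR_minus_right)
      then have "q (r *\<^sub>R x) = p ((- r) *\<^sub>R N x) - p ((- r) *\<^sub>R P x)" using key PN False
        by (metis scaleR_nonneg_nonneg neg_0_le_iff_le linear)
      also have "\<dots> = (- r) * p (N x) - (- r) * p (P x)"
      proof -
        have r: "0 \<le> - r" using False by simp
        show ?thesis using hom[OF r PN(3)[of x]] hom[OF r PN(2)[of x]] by simp
      qed
      also have "\<dots> = r *\<^sub>R q x" unfolding q_def by (simp add: algebra_simps)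
      finally show ?thesis .
    qed
  next
    fix x
    have "norm (q x) \<le> \<bar>p (P x)\<bar> + \<bar>p (N x)\<bar>" unfolding q_def by simp
    also have "\<dots> \<le> K * norm (P x) + K * norm (N x)" using bnd PN by (intro add_mono) auto
    also have "\<dots> \<le> K * norm x + K * norm x" unfolding P_def N_def
      using K norm_pp norm_np by (intro add_mono mult_left_mono) auto
    finally show "norm (q x) \<le> norm x * (2 * K)" by (simp add: algebra_simps)
  qed
  have "\<forall>a. 0 \<le> a \<longrightarrow> blinfun_apply (Blinfun q) a = p a"
    using key[of _ 0] p0 by (simp add: bounded_linear_Blinfun_apply[OF lin])
  then show ?thesis by blast
qed

lemma pos_sum_ge_term:
  fixes a :: "nat \<Rightarrow> 'a::banach_lattice"
  assumes "finite I" "m \<in> I" "\<And>i. 0 \<le> a i"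
  shows "a m \<le> sum a I"
proof -
  have "sum a I = a m + sum a (I - {m})" using assms by (simp add: sum.remove)
  moreover have "0 \<le> sum a (I - {m})" using assms by (intro sum_nonneg) auto
  ultimately show ?thesis by simp
qed

lemma disjointify:
  fixes y :: "nat \<Rightarrow> 'a::banach_lattice"
  assumes pos: "\<And>n. 0 \<le> y n" and bnd: "\<And>n. norm (y n) \<le> M"
  defines "s \<equiv> (\<Sum>k. (1/2::real)^k *\<^sub>R y k)"
  defines "W \<equiv> (\<lambda>n. (4::real)^n *\<^sub>R (\<Sum>k<n. y k))"
  defines "z \<equiv> (\<lambda>n. sup (y n - (W n + (1/2::real)^n *\<^sub>R s)) 0)"
  shows "0 \<le> s" "\<And>n. 0 \<le> z n" "\<And>n. z n \<le> y n"
    "\<And>i j. i \<noteq> j \<Longrightarrow> inf (z i) (z j) = 0"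
    "\<And>n. z n = y n - inf (y n) (W n + (1/2::real)^n *\<^sub>R s)"
    "\<And>n. inf (y n) (W n + (1/2::real)^n *\<^sub>R s) \<le> inf (y n) (W n) + (1/2::real)^n *\<^sub>R s"
    "\<And>n. 0 \<le> W n"
proof -
  have M: "0 \<le> M" using bnd[of 0] norm_ge_zero[of "y 0"] by linarith
  have summ: "summable (\<lambda>k. (1/2::real)^k *\<^sub>R y k)"
  proof (rule summable_norm_cancel, rule summable_comparison_test)
    show "\<exists>N. \<forall>n\<ge>N. norm (norm ((1/2::real)^n *\<^sub>R y n)) \<le> M * (1/2)^n"
      using bnd by (auto simp: mult.commute intro: mult_left_mono)
    show "summable (\<lambda>n. M * (1/2::real)^n)" by (intro summable_mult summable_geometric) simp
  qed
  have lim: "(\<lambda>N. \<Sum>k<N. (1/2::real)^k *\<^sub>R y k) \<longlonglongrightarrow> s"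
    unfolding s_def using summ by (rule summable_LIMSEQ)
  have sge: "(1/2::real)^m *\<^sub>R y m \<le> s" for m
  proof -
    have "(\<lambda>N. (\<Sum>k<N. (1/2::real)^k *\<^sub>R y k) - (1/2::real)^m *\<^sub>R y m) \<longlonglongrightarrow> s - (1/2::real)^m *\<^sub>R y m"
      by (intro tendsto_diff lim tendsto_const)
    moreover have "eventually (\<lambda>N. 0 \<le> (\<Sum>k<N. (1/2::real)^k *\<^sub>R y k) - (1/2::real)^m *\<^sub>R y m) sequentially"
      using eventually_gt_at_top[of m]
    proof eventually_elim
      case (elim N)
      have "(1/2::real)^m *\<^sub>R y m \<le> (\<Sum>k<N. (1/2::real)^k *\<^sub>R y k)"
        using elim pos by (intro pos_sum_ge_term) (auto intro: scaleR_nonneg_nonneg)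
      then show ?case by simp
    qed
    ultimately have "0 \<le> s - (1/2::real)^m *\<^sub>R y m" by (rule pos_limit)
    then show ?thesis by simp
  qed
  show s0: "0 \<le> s" using sge[of 0] pos[of 0] by simp
  have hs: "0 \<le> (1/2::real)^n *\<^sub>R s" for n using s0 by (intro scaleR_nonneg_nonneg) simp_all
  show W0: "0 \<le> W n" for n unfolding W_def using pos by (intro scaleR_nonneg_nonneg sum_nonneg) auto
  show "0 \<le> z n" for n unfolding z_def by simp
  show zeq: "z n = y n - inf (y n) (W n + (1/2::real)^n *\<^sub>R s)" for n
    unfolding z_def by (rule sup_diff_zero)
  show "z n \<le> y n" for n
  proof -
    have "0 \<le> W n + (1/2::real)^n *\<^sub>R s" using W0[of n] s0 by (intro add_nonneg_nonneg scaleR_nonneg_nonneg) auto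
    then have "y n - (W n + (1/2::real)^n *\<^sub>R s) \<le> y n" by (rule diff_le_self_pos)
    then show ?thesis unfolding z_def using pos[of n] by simp
  qed
  show "inf (y n) (W n + (1/2::real)^n *\<^sub>R s) \<le> inf (y n) (W n) + (1/2::real)^n *\<^sub>R s" for n
    using s0 by (intro inf_add_le2 scaleR_nonneg_nonneg) simp_all
  have disj_lt: "inf (z i) (z j) = 0" if ij: "i < j" for i j
  proof -
    define l where "l = (1/2::real)^i * (1/2)^j"
    define m where "m = (4::real)^j"
    have l: "0 < l" and m: "0 < m" unfolding l_def m_def by auto
    have lm: "1 \<le> l * m"
    proof -
      have "m = 2^j * 2^j" unfolding m_def by (simp add: power_mult_distrib[symmetric])
      then have "l * m = (1/2)^i * 2^j" unfolding l_def by (simp add: power_mult_distrib[symmetric] field_simps)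
      also have "\<dots> \<ge> (1/2)^i * 2^i" using ij by (intro mult_left_mono power_increasing) auto
      also have "(1/2::real)^i * 2^i = 1" by (simp add: power_mult_distrib[symmetric])
      finally show ?thesis .
    qed
    have zi: "z i \<le> sup (y i - l *\<^sub>R y j) 0"
    proof -
      have "l *\<^sub>R y j = (1/2::real)^i *\<^sub>R ((1/2::real)^j *\<^sub>R y j)" unfolding l_def by simp
      also have "\<dots> \<le> (1/2::real)^i *\<^sub>R s" by (intro scaleR_left_mono sge) auto
      also have "\<dots> \<le> W i + (1/2::real)^i *\<^sub>R s" using W0[of i] by (simp add: add_increasing)
      finally have "y i - (W i + (1/2::real)^i *\<^sub>R s) \<le> y i - l *\<^sub>R y j" by (rule diff_left_mono)
      then show ?thesis unfolding z_def by (rule sup_mono) simp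
    qed
    have zj: "z j \<le> sup (y j - m *\<^sub>R y i) 0"
    proof -
      have "y i \<le> (\<Sum>k<j. y k)" using ij pos by (intro pos_sum_ge_term) auto
      then have "m *\<^sub>R y i \<le> W j" unfolding W_def m_def by (intro scaleR_left_mono) auto
      also have "\<dots> \<le> W j + (1/2::real)^j *\<^sub>R s" using hs[of j] by simp
      finally have "y j - (W j + (1/2::real)^j *\<^sub>R s) \<le> y j - m *\<^sub>R y i" by (rule diff_left_mono)
      then show ?thesis unfolding z_def by (rule sup_mono) simp
    qed
    have "inf (z i) (z j) \<le> inf (sup (y i - l *\<^sub>R y j) 0) (sup (y j - m *\<^sub>R y i) 0)"
      using zi zj by (rule inf_mono)
    also have "\<dots> = 0" using pos l m lm by (intro disj_lemma) auto
    finally show ?thesis unfolding z_def by (intro order.antisym) auto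
  qed
  show "inf (z i) (z j) = 0" if "i \<noteq> j" for i j
  proof (cases "i < j")
    case True then show ?thesis by (rule disj_lt)
  next
    case False
    with that have "j < i" by simp
    then show ?thesis using disj_lt[of j i] by (simp add: inf_commute)
  qed
qed

lemma dual_le_trans: "dual_le f g \<Longrightarrow> dual_le g h \<Longrightarrow> dual_le f h"
  unfolding dual_le_def by (meson order_trans)

lemma posf_diff: "dual_le g f \<Longrightarrow> posf (f - g)"
  unfolding posf_def dual_le_def by (simp add: blinfun.diff_left)

lemma inf_pointwise:
  fixes D :: "('a::banach_lattice \<Rightarrow>\<^sub>L real) set"
  assumes ne: "D \<noteq> {}"
    and dir: "\<forall>f\<in>D. \<forall>g\<in>D. \<exists>h\<in>D. dual_le h f \<and> dual_le h g"
    and pos: "\<forall>f\<in>D. dual_le 0 f"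
    and inf0: "\<forall>h. (\<forall>f\<in>D. dual_le h f) \<longrightarrow> dual_le h 0"
    and w: "0 \<le> w" and eta: "0 < eta"
  shows "\<exists>f\<in>D. blinfun_apply f w < eta"
proof (rule ccontr)
  assume "\<not> ?thesis"
  then have big: "\<And>f. f \<in> D \<Longrightarrow> eta \<le> blinfun_apply f w" by force
  have fpos: "\<And>f a. f \<in> D \<Longrightarrow> 0 \<le> a \<Longrightarrow> 0 \<le> blinfun_apply f a"
    using pos unfolding dual_le_def by simp
  define p where "p a = (INF f\<in>D. blinfun_apply f a)" for a
  have bdd: "bdd_below ((\<lambda>f. blinfun_apply f a) ` D)" if "0 \<le> a" for a
    using fpos that by (intro bdd_belowI2) auto
  have plow: "p a \<le> blinfun_apply f a" if "0 \<le> a" "f \<in> D" for a f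
    unfolding p_def using bdd[OF that(1)] that(2) by (rule cINF_lower)
  have pgr: "m \<le> p a" if "\<And>f. f \<in> D \<Longrightarrow> m \<le> blinfun_apply f a" for m a
    unfolding p_def using ne that by (rule cINF_greatest)
  have p0: "0 \<le> p a" if "0 \<le> a" for a using fpos that by (intro pgr) auto
  have add: "p (a + b) = p a + p b" if a: "0 \<le> a" and b: "0 \<le> b" for a b
  proof (rule order.antisym)
    have "p (a + b) - p a \<le> p b"
    proof (rule pgr)
      fix g assume g: "g \<in> D"
      have "p (a + b) - blinfun_apply g b \<le> p a"
      proof (rule pgr)
        fix f assume f: "f \<in> D"
        obtain k where k: "k \<in> D" "dual_le k f" "dual_le k g" using dir f g by blast
        have "p (a + b) \<le> blinfun_apply k (a + b)" using a b k by (intro plow) auto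
        also have "\<dots> = blinfun_apply k a + blinfun_apply k b" by (simp add: blinfun.add_right)
        also have "\<dots> \<le> blinfun_apply f a + blinfun_apply g b"
          using k a b unfolding dual_le_def by (intro add_mono) auto
        finally show "p (a + b) - blinfun_apply g b \<le> blinfun_apply f a" by simp
      qed
      then show "p (a + b) - p a \<le> blinfun_apply g b" by simp
    qed
    then show "p (a + b) \<le> p a + p b" by simp
    show "p a + p b \<le> p (a + b)"
    proof (rule pgr)
      fix f assume f: "f \<in> D"
      have "p a + p b \<le> blinfun_apply f a + blinfun_apply f b"
        using a b f by (intro add_mono plow) auto
      then show "p a + p b \<le> blinfun_apply f (a + b)" by (simp add: blinfun.add_right)
    qed
  qed
  have hom: "p (c *\<^sub>R a) = c * p a" if c: "0 \<le> c" and a: "0 \<le> a" for c a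
  proof (cases "c = 0")
    case True
    then show ?thesis unfolding p_def using ne by simp
  next
    case False
    with c have c: "0 < c" by simp
    show ?thesis
    proof (rule order.antisym)
      have "p (c *\<^sub>R a) / c \<le> p a"
      proof (rule pgr)
        fix f assume f: "f \<in> D"
        have "p (c *\<^sub>R a) \<le> blinfun_apply f (c *\<^sub>R a)" using a c f by (intro plow scaleR_nonneg_nonneg) auto
        then show "p (c *\<^sub>R a) / c \<le> blinfun_apply f a" using c
          by (simp add: blinfun.scaleR_right divide_le_eq mult.commute)
      qed
      then show "p (c *\<^sub>R a) \<le> c * p a" using c by (simp add: divide_le_eq mult.commute)
      show "c * p a \<le> p (c *\<^sub>R a)"
      proof (rule pgr)
        fix f assume f: "f \<in> D"
        have "p a \<le> blinfun_apply f a" using a f by (intro plow) auto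
        then show "c * p a \<le> blinfun_apply f (c *\<^sub>R a)" using c
          by (simp add: blinfun.scaleR_right)
      qed
    qed
  qed
  obtain f0 where f0: "f0 \<in> D" using ne by blast
  have bnd: "\<bar>p a\<bar> \<le> norm f0 * norm a" if a: "0 \<le> a" for a
  proof -
    have "\<bar>p a\<bar> = p a" using p0[OF a] by simp
    also have "\<dots> \<le> blinfun_apply f0 a" using a f0 by (rule plow)
    also have "\<dots> \<le> norm f0 * norm a" using norm_blinfun[of f0 a] by simp
    finally show ?thesis .
  qed
  obtain h where h: "\<And>a. 0 \<le> a \<Longrightarrow> blinfun_apply h a = p a"
    using cone_ext[OF add hom bnd] by auto
  have "\<forall>f\<in>D. dual_le h f" unfolding dual_le_def using h plow by simp
  then have "dual_le h 0" using inf0 by blast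
  then have "blinfun_apply h w \<le> 0" unfolding dual_le_def using w by simp
  then have "p w \<le> 0" using h[OF w] by simp
  moreover have "eta \<le> p w" using big by (intro pgr) auto
  ultimately show False using eta by simp
qed

lemma norm_witness:
  fixes f :: "'a::banach_lattice \<Rightarrow>\<^sub>L real"
  assumes f: "posf f" and e: "0 < e" and nf: "e \<le> norm f"
  shows "\<exists>x. 0 \<le> x \<and> norm x \<le> 1 \<and> e / 2 \<le> blinfun_apply f x"
proof (rule ccontr)
  assume "\<not> ?thesis"
  then have small: "\<And>x. 0 \<le> x \<Longrightarrow> norm x \<le> 1 \<Longrightarrow> blinfun_apply f x < e / 2" by force
  have "norm (blinfun_apply f x) \<le> e / 2 * norm x" for x
  proof (cases "x = 0")
    case True then show ?thesis by simp
  next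
    case False
    then have nx: "0 < norm x" by simp
    define u where "u = (1 / norm x) *\<^sub>R lmod x"
    have u0: "0 \<le> u" unfolding u_def using nx lmod_ge0[of x] by (intro scaleR_nonneg_nonneg) auto
    have nu: "norm u = 1" unfolding u_def using nx by (simp add: norm_lmod)
    have "blinfun_apply f u < e / 2" using small u0 nu by simp
    then have "blinfun_apply f (lmod x) / norm x < e / 2" unfolding u_def
      by (simp add: blinfun.scaleR_right)
    then have "blinfun_apply f (lmod x) \<le> e / 2 * norm x" using nx by (simp add: divide_less_eq)
    moreover have "\<bar>blinfun_apply f x\<bar> \<le> blinfun_apply f (lmod x)" by (rule posf_abs[OF f])
    ultimately show ?thesis by simp
  qed
  then have "norm f \<le> e / 2" using e by (intro norm_blinfun_bound) auto
  with nf e show False by simp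
qed

lemma telescoping_operator:
  fixes F :: "nat \<Rightarrow> ('a::banach_lattice \<Rightarrow>\<^sub>L real)"
  assumes dec: "\<And>n. dual_le (F (Suc n)) (F n)" and pos: "\<And>n. posf (F n)"
  shows "positive_l1_operator (\<lambda>y k. blinfun_apply (F k) y - blinfun_apply (F (Suc k)) y)"
proof -
  define T where "T = (\<lambda>y k. blinfun_apply (F k) y - blinfun_apply (F (Suc k)) y)"
  have Tpos: "0 \<le> T v k" if "0 \<le> v" for v k
    using dec[of k] that unfolding T_def dual_le_def by simp
  have Tabs: "\<bar>T y k\<bar> \<le> T (lmod y) k" for y k
    using posf_abs[OF posf_diff[OF dec[of k]], of y] unfolding T_def by (simp add: blinfun.diff_left)
  have partial: "(\<Sum>k<N. T v k) \<le> blinfun_apply (F 0) v" if "0 \<le> v" for v N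
  proof -
    have "(\<Sum>k<N. T v k) = blinfun_apply (F 0) v - blinfun_apply (F N) v"
      unfolding T_def by (rule sum_lessThan_telescope')
    moreover have "0 \<le> blinfun_apply (F N) v" using pos[of N] that unfolding posf_def by simp
    ultimately show ?thesis by simp
  qed
  have summ_pos: "summable (T v)" if "0 \<le> v" for v
    using Tpos[OF that] partial[OF that] by (intro summableI_nonneg_bounded) auto
  have summ: "summable (\<lambda>k. \<bar>T y k\<bar>)" for y
    by (rule summable_rabs_comparison_test[OF _ summ_pos[OF lmod_ge0[of y]]]) (use Tabs in auto)
  have l1b: "l1norm (T y) \<le> norm (F 0) * norm y" for y
  proof -
    have "l1norm (T y) \<le> (\<Sum>k. T (lmod y) k)" unfolding l1norm_def
      using Tabs summ summ_pos[OF lmod_ge0[of y]] by (intro suminf_le) auto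
    also have "\<dots> \<le> blinfun_apply (F 0) (lmod y)"
      using summ_pos[OF lmod_ge0[of y]] partial[OF lmod_ge0[of y]] by (intro suminf_le_const) auto
    also have "\<dots> \<le> norm (F 0) * norm (lmod y)" using norm_blinfun[of "F 0" "lmod y"] by simp
    finally show ?thesis by (simp add: norm_lmod)
  qed
  have "l1_operator T" unfolding l1_operator_def
  proof (intro conjI allI)
    show "summable (\<lambda>n. \<bar>T x n\<bar>)" for x by (rule summ)
    show "T (x + y) = (\<lambda>n. T x n + T y n)" for x y unfolding T_def by (simp add: blinfun.add_right algebra_simps)
    show "T (c *\<^sub>R x) = (\<lambda>n. c * T x n)" for c x unfolding T_def by (simp add: blinfun.scaleR_right algebra_simps)
    show "\<exists>C. \<forall>x. l1norm (T x) \<le> C * norm x" using l1b by blast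
  qed
  then show ?thesis unfolding positive_l1_operator_def T_def[symmetric] using Tpos by blast
qed

lemma dp_imp_oc:
  assumes H: "\<forall>T::'a::banach_lattice \<Rightarrow> nat \<Rightarrow> real. positive_l1_operator T \<longrightarrow> uaw_DP_l1 T"
  shows "dual_norm_order_continuous TYPE('a)"
  unfolding dual_norm_order_continuous_def
proof (rule allI, rule impI)
  fix D :: "('a \<Rightarrow>\<^sub>L real) set"
  assume "D \<noteq> {} \<and> (\<forall>f\<in>D. \<forall>g\<in>D. \<exists>h\<in>D. dual_le h f \<and> dual_le h g) \<and>
        (\<forall>f\<in>D. dual_le 0 f) \<and> (\<forall>h. (\<forall>f\<in>D. dual_le h f) \<longrightarrow> dual_le h 0)"
  then have ne: "D \<noteq> {}" and dir: "\<forall>f\<in>D. \<forall>g\<in>D. \<exists>h\<in>D. dual_le h f \<and> dual_le h g"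
    and pos: "\<forall>f\<in>D. dual_le 0 f" and inf0: "\<forall>h. (\<forall>f\<in>D. dual_le h f) \<longrightarrow> dual_le h 0"
    by auto
  show "\<forall>e>0. \<exists>f\<in>D. norm f < e"
  proof (intro allI impI, rule ccontr)
    fix e :: real assume e: "0 < e" and "\<not> (\<exists>f\<in>D. norm f < e)"
    then have big: "\<And>f. f \<in> D \<Longrightarrow> e \<le> norm f" by force
    have posD: "\<And>f. f \<in> D \<Longrightarrow> posf f" using pos posf_dual_le by blast
    define P :: "nat \<Rightarrow> ('a \<Rightarrow>\<^sub>L real) \<times> 'a \<times> 'a \<Rightarrow> bool" where
      "P = (\<lambda>n (f, x, S). f \<in> D \<and> 0 \<le> x \<and> norm x \<le> 1 \<and> e / 2 \<le> blinfun_apply f x \<and> 0 \<le> S \<and>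
          blinfun_apply f ((4::real)^n *\<^sub>R S) < inverse (real (Suc n)) \<and> (n = 0 \<longrightarrow> S = 0))"
    define Q :: "nat \<Rightarrow> ('a \<Rightarrow>\<^sub>L real) \<times> 'a \<times> 'a \<Rightarrow> ('a \<Rightarrow>\<^sub>L real) \<times> 'a \<times> 'a \<Rightarrow> bool" where
      "Q = (\<lambda>n (f, x, S) (f', x', S'). S' = S + x \<and> dual_le f' f)"
    have start: "\<exists>st. P 0 st"
    proof -
      obtain f0 where f0: "f0 \<in> D" using ne by blast
      obtain x0 where x0: "0 \<le> x0" "norm x0 \<le> 1" "e / 2 \<le> blinfun_apply f0 x0"
        using norm_witness[OF posD[OF f0] e big[OF f0]] by blast
      have "P 0 (f0, x0, 0)" unfolding P_def using f0 x0 by simp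
      then show ?thesis by blast
    qed
    have step: "\<exists>st'. P (Suc n) st' \<and> Q n st st'" if "P n st" for n st
    proof -
      obtain f x S where st: "st = (f, x, S)" by (metis prod.exhaust)
      from that have f: "f \<in> D" and x: "0 \<le> x" and S: "0 \<le> S" unfolding st P_def by auto
      define S' where "S' = S + x"
      have S': "0 \<le> S'" unfolding S'_def using x S by simp
      define w where "w = (4::real)^(Suc n) *\<^sub>R S'"
      have w: "0 \<le> w" unfolding w_def using S' by (intro scaleR_nonneg_nonneg) auto
      obtain g where g: "g \<in> D" "blinfun_apply g w < inverse (real (Suc (Suc n)))"
        using inf_pointwise[OF ne dir pos inf0 w, of "inverse (real (Suc (Suc n)))"] by auto
      obtain k where k: "k \<in> D" "dual_le k f" "dual_le k g" using dir f g(1) by blast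
      have kw: "blinfun_apply k w < inverse (real (Suc (Suc n)))"
        using k(3) w g(2) unfolding dual_le_def by (meson le_less_trans)
      obtain x' where x': "0 \<le> x'" "norm x' \<le> 1" "e / 2 \<le> blinfun_apply k x'"
        using norm_witness[OF posD[OF k(1)] e big[OF k(1)]] by blast
      have "P (Suc n) (k, x', S')" unfolding P_def using k x' S' kw unfolding w_def by simp
      moreover have "Q n st (k, x', S')" unfolding Q_def st S'_def using k by simp
      ultimately show ?thesis by blast
    qed
    obtain st where st: "\<And>n. P n (st n) \<and> Q n (st n) (st (Suc n))"
      using dependent_nat_choice[of P Q, OF start step] by blast
    define F where "F n = fst (st n)" for n
    define X where "X n = fst (snd (st n))" for n
    define S where "S n = snd (snd (st n))" for n
    have Pn: "P n (F n, X n, S n)" for n using st[of n] unfolding F_def X_def S_def by simp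
    have Qn: "Q n (F n, X n, S n) (F (Suc n), X (Suc n), S (Suc n))" for n
      using st[of n] unfolding F_def X_def S_def by simp
    have FD: "F n \<in> D" and X0: "0 \<le> X n" and Xn: "norm (X n) \<le> 1"
      and FX: "e / 2 \<le> blinfun_apply (F n) (X n)" and S0: "0 \<le> S n"
      and FS: "blinfun_apply (F n) ((4::real)^n *\<^sub>R S n) < inverse (real (Suc n))" for n
      using Pn[of n] unfolding P_def by auto
    have Szero: "S 0 = 0" using Pn[of 0] unfolding P_def by auto
    have Srec: "S (Suc n) = S n + X n" and Fle: "dual_le (F (Suc n)) (F n)" for n
      using Qn[of n] unfolding Q_def by auto
    have Ssum: "S n = (\<Sum>k<n. X k)" for n by (induction n) (auto simp: Szero Srec)
    have F0le: "dual_le (F n) (F 0)" for n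
    proof (induction n)
      case 0 then show ?case unfolding dual_le_def by simp
    next
      case (Suc n) then show ?case using Fle[of n] dual_le_trans by blast
    qed
    have Fpos: "posf (F n)" for n using posD[OF FD] .
    define s where "s = (\<Sum>k. (1/2::real)^k *\<^sub>R X k)"
    define W where "W n = (4::real)^n *\<^sub>R (\<Sum>k<n. X k)" for n
    define z where "z n = sup (X n - (W n + (1/2::real)^n *\<^sub>R s)) 0" for n
    note dj = disjointify[of X 1, OF X0 Xn, folded s_def, folded W_def, folded z_def]
    define T where "T = (\<lambda>y k. blinfun_apply (F k) y - blinfun_apply (F (Suc k)) y)"
    have Tpos: "positive_l1_operator T" unfolding T_def using Fle Fpos by (rule telescoping_operator)
    then have "uaw_DP_l1 T" using H by blast
    moreover have "bounded (range z)"
    proof -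
      have "norm (z n) \<le> 1" for n using norm_mono_pos[OF dj(2) dj(3), of n] Xn[of n] by simp
      then show ?thesis unfolding bounded_iff by blast
    qed
    moreover have "uaw_null z" unfolding uaw_null_def
    proof (intro allI impI)
      fix u :: 'a and G :: "'a \<Rightarrow>\<^sub>L real"
      assume u: "0 \<le> u"
      have lz: "lmod (z n) = z n" for n using dj(2) by (rule lmod_pos)
      show "(\<lambda>n. blinfun_apply G (inf (lmod (z n)) u)) \<longlonglongrightarrow> 0"
        unfolding lz
      proof (rule disj_weak_null)
        fix i j :: nat assume "i \<noteq> j"
        then have "inf (z i) (z j) = 0" by (rule dj(4))
        moreover have "inf (inf (z i) u) (inf (z j) u) \<le> inf (z i) (z j)" by (intro inf_mono) auto
        ultimately show "inf (inf (z i) u) (inf (z j) u) = 0"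
          using dj(2)[of i] dj(2)[of j] u by (intro order.antisym) auto
      next
        show "0 \<le> inf (z i) u" for i using dj(2)[of i] u by simp
        show "inf (z i) u \<le> u" for i by simp
      qed
    qed
    ultimately have lim0: "(\<lambda>n. l1norm (T (z n))) \<longlonglongrightarrow> 0" unfolding uaw_DP_l1_def by blast
    define LB where "LB n = e / 2 - inverse (real (Suc n)) - inverse (real (Suc (Suc n)))
        - (1/2::real)^n * blinfun_apply (F 0) s" for n
    have LBle: "LB n \<le> l1norm (T (z n))" for n
    proof -
      have WS: "W n = (4::real)^n *\<^sub>R S n" unfolding W_def Ssum ..
      have sF: "blinfun_apply (F n) s \<le> blinfun_apply (F 0) s" using F0le[of n] dj(1) unfolding dual_le_def by simp
      have "blinfun_apply (F n) (inf (X n) (W n + (1/2::real)^n *\<^sub>R s))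
          \<le> blinfun_apply (F n) (inf (X n) (W n) + (1/2::real)^n *\<^sub>R s)"
        by (rule posf_mono[OF Fpos dj(6)])
      also have "\<dots> = blinfun_apply (F n) (inf (X n) (W n)) + (1/2::real)^n * blinfun_apply (F n) s"
        by (simp add: blinfun.add_right blinfun.scaleR_right)
      also have "\<dots> \<le> blinfun_apply (F n) (W n) + (1/2::real)^n * blinfun_apply (F 0) s"
        using sF by (intro add_mono posf_mono[OF Fpos] mult_left_mono) auto
      also have "\<dots> \<le> inverse (real (Suc n)) + (1/2::real)^n * blinfun_apply (F 0) s"
        using FS[of n] unfolding WS by simp
      finally have A: "blinfun_apply (F n) (inf (X n) (W n + (1/2::real)^n *\<^sub>R s))
          \<le> inverse (real (Suc n)) + (1/2::real)^n * blinfun_apply (F 0) s" .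
      have Fz: "blinfun_apply (F n) (z n) = blinfun_apply (F n) (X n)
          - blinfun_apply (F n) (inf (X n) (W n + (1/2::real)^n *\<^sub>R s))"
        by (subst dj(5)[of n]) (rule blinfun.diff_right)
      have "X n \<le> S (Suc n)" unfolding Srec using S0[of n] by (simp add: add_increasing)
      also have "S (Suc n) \<le> (4::real)^(Suc n) *\<^sub>R S (Suc n)"
      proof -
        have "1 \<le> (4::real)^(Suc n)" by (rule one_le_power) simp
        from scaleR_right_mono[OF this S0[of "Suc n"]] show ?thesis by simp
      qed
      finally have "X n \<le> (4::real)^(Suc n) *\<^sub>R S (Suc n)" .
      then have B: "blinfun_apply (F (Suc n)) (z n) < inverse (real (Suc (Suc n)))"
        using posf_mono[OF Fpos dj(3)[of n], of "Suc n"] posf_mono[OF Fpos, of "X n" _ "Suc n"] FS[of "Suc n"]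
        by (meson le_less_trans)
      have "LB n \<le> T (z n) n" unfolding T_def LB_def using A B FX[of n] Fz by simp
      also have "T (z n) n \<le> \<bar>T (z n) n\<bar>" by simp
      also have "\<bar>T (z n) n\<bar> \<le> l1norm (T (z n))"
      proof -
        have "summable (\<lambda>k. \<bar>T (z n) k\<bar>)" using Tpos unfolding positive_l1_operator_def l1_operator_def by blast
        then have "(\<Sum>k\<in>{n}. \<bar>T (z n) k\<bar>) \<le> (\<Sum>k. \<bar>T (z n) k\<bar>)" by (intro sum_le_suminf) auto
        then show ?thesis unfolding l1norm_def by simp
      qed
      finally show ?thesis .
    qed
    have "LB \<longlonglongrightarrow> e / 2 - 0 - 0 - 0 * blinfun_apply (F 0) s"
      unfolding LB_def
      by (intro tendsto_diff tendsto_mult tendsto_const LIMSEQ_inverse_real_of_nat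
          LIMSEQ_Suc[OF LIMSEQ_inverse_real_of_nat] LIMSEQ_power_zero) simp
    then have "LB \<longlonglongrightarrow> e / 2" by simp
    have "e / 2 \<le> 0"
      using tendsto_le[OF trivial_limit_sequentially lim0 \<open>LB \<longlonglongrightarrow> e / 2\<close>] LBle by simp
    with e show False by simp
  qed
qed

lemma tail_contra:
  fixes phi :: "'a::banach_lattice \<Rightarrow>\<^sub>L real" and z :: "nat \<Rightarrow> 'a"
  assumes phipos: "posf phi" and zpos: "\<And>n. 0 \<le> z n"
    and zdisj: "\<And>i j. i \<noteq> j \<Longrightarrow> inf (z i) (z j) = 0"
    and zM: "\<And>n. norm (z n) \<le> M" and M: "0 < M" and dl: "0 < dl"
    and big: "\<And>n. j0 \<le> n \<Longrightarrow> dl \<le> blinfun_apply phi (z n)"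
    and OC: "dual_norm_order_continuous TYPE('a)"
  shows False
proof -
  let ?f = "blinfun_apply phi"
  have fmono: "a \<le> b \<Longrightarrow> ?f a \<le> ?f b" for a b by (rule posf_mono[OF phipos])
  have fpos: "0 \<le> a \<Longrightarrow> 0 \<le> ?f a" for a using phipos unfolding posf_def by simp
  define Sg where "Sg A = (\<Sum>n\<in>A. z n)" for A
  have Sg0: "0 \<le> Sg A" for A unfolding Sg_def using zpos by (intro sum_nonneg) auto
  have Sgmono: "A \<subseteq> B \<Longrightarrow> finite B \<Longrightarrow> Sg A \<le> Sg B" for A B
    unfolding Sg_def using zpos by (intro sum_mono2) auto
  define V where "V N = {t *\<^sub>R Sg {N..<N+K} | t K. 0 \<le> t}" for N
  have V0: "0 \<in> V N" for N unfolding V_def by (rule CollectI, rule exI[of _ 0]) auto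
  have Vne: "V N \<noteq> {}" for N using V0 by auto
  have Vpos: "v \<in> V N \<Longrightarrow> 0 \<le> v" for v N unfolding V_def using Sg0 by (auto intro: scaleR_nonneg_nonneg)
  have Vscale: "v \<in> V N \<Longrightarrow> 0 \<le> c \<Longrightarrow> c *\<^sub>R v \<in> V N" for v N c
    unfolding V_def by auto (metis mult_nonneg_nonneg)
  have Vadd: "\<exists>v\<in>V N. v1 + v2 \<le> v" if vv1: "v1 \<in> V N" and vv2: "v2 \<in> V N" for v1 v2 N
  proof -
    obtain t1 K1 where 1: "v1 = t1 *\<^sub>R Sg {N..<N+K1}" "0 \<le> t1" using vv1 unfolding V_def by auto
    obtain t2 K2 where 2: "v2 = t2 *\<^sub>R Sg {N..<N+K2}" "0 \<le> t2" using vv2 unfolding V_def by auto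
    let ?K = "max K1 K2"
    have "v1 \<le> t1 *\<^sub>R Sg {N..<N+?K}" unfolding 1 using 1 by (intro scaleR_left_mono Sgmono) auto
    moreover have "v2 \<le> t2 *\<^sub>R Sg {N..<N+?K}" unfolding 2 using 2 by (intro scaleR_left_mono Sgmono) auto
    ultimately have "v1 + v2 \<le> (t1 + t2) *\<^sub>R Sg {N..<N+?K}" by (simp add: scaleR_add_left add_mono)
    moreover have "(t1 + t2) *\<^sub>R Sg {N..<N+?K} \<in> V N" unfolding V_def using 1 2 by auto
    ultimately show ?thesis by blast
  qed
  define p where "p N y = (SUP v\<in>V N. ?f (inf y v))" for N y
  have bddV: "bdd_above ((\<lambda>v. ?f (inf y v)) ` V N)" for y N
    by (rule bdd_aboveI2[of _ _ "?f y"]) (rule fmono, simp)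
  have pup: "v \<in> V N \<Longrightarrow> ?f (inf y v) \<le> p N y" for v N y
    unfolding p_def by (rule cSUP_upper[OF _ bddV])
  have pleast: "(\<And>v. v \<in> V N \<Longrightarrow> ?f (inf y v) \<le> m) \<Longrightarrow> p N y \<le> m" for N y m
    unfolding p_def by (rule cSUP_least[OF Vne])
  have p0: "0 \<le> y \<Longrightarrow> 0 \<le> p N y" for N y
    using pup[of 0 N y, OF V0] fpos[of "inf y 0"] by simp
  have pley: "p N y \<le> ?f y" for N y by (rule pleast) (rule fmono, simp)
  have padd: "p N (a + b) = p N a + p N b" if a: "0 \<le> a" and b: "0 \<le> b" for N a b
  proof (rule order.antisym)
    show "p N (a + b) \<le> p N a + p N b"
    proof (rule pleast)
      fix v assume v: "v \<in> V N"
      have "?f (inf (a + b) v) \<le> ?f (inf a v + inf b v)" using a b Vpos[OF v] by (intro fmono inf_add_le)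
      also have "\<dots> = ?f (inf a v) + ?f (inf b v)" by (simp add: blinfun.add_right)
      also have "\<dots> \<le> p N a + p N b" using v by (intro add_mono pup)
      finally show "?f (inf (a + b) v) \<le> p N a + p N b" .
    qed
    have "p N a \<le> p N (a + b) - p N b"
    proof (rule pleast)
      fix v1 assume v1: "v1 \<in> V N"
      have "p N b \<le> p N (a + b) - ?f (inf a v1)"
      proof (rule pleast)
        fix v2 assume v2: "v2 \<in> V N"
        obtain v where v: "v \<in> V N" "v1 + v2 \<le> v" using Vadd[OF v1 v2] by blast
        have v1v: "v1 \<le> v" using v(2) Vpos[OF v2] by (metis add_increasing2 order_refl order_trans)
        have v2v: "v2 \<le> v" using v(2) Vpos[OF v1] by (metis add_increasing order_refl order_trans)
        have "?f (inf a v1) + ?f (inf b v2) \<le> ?f (inf a v) + ?f (inf b v)"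
          using v1v v2v by (intro add_mono fmono inf_mono) auto
        also have "\<dots> = ?f (inf a v + inf b v)" by (simp add: blinfun.add_right)
        also have "\<dots> \<le> ?f (inf (a + b) (2 *\<^sub>R v))"
        proof (rule fmono)
          have "inf a v + inf b v \<le> a + b" by (intro add_mono) auto
          moreover have "inf a v + inf b v \<le> v + v" by (intro add_mono) auto
          ultimately show "inf a v + inf b v \<le> inf (a + b) (2 *\<^sub>R v)" by (simp add: scaleR_2)
        qed
        also have "\<dots> \<le> p N (a + b)" using Vscale[OF v(1), of 2] by (intro pup) auto
        finally show "?f (inf b v2) \<le> p N (a + b) - ?f (inf a v1)" by simp
      qed
      then show "?f (inf a v1) \<le> p N (a + b) - p N b" by simp
    qed
    then show "p N a + p N b \<le> p N (a + b)" by simp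
  qed
  have phom: "p N (c *\<^sub>R a) = c * p N a" if c: "0 \<le> c" and a: "0 \<le> a" for N c a
  proof (cases "c = 0")
    case True
    have "p N 0 = 0"
    proof (rule order.antisym)
      show "p N 0 \<le> 0" by (rule pleast) (use Vpos in \<open>simp add: inf_absorb1\<close>)
      show "0 \<le> p N 0" by (rule p0) simp
    qed
    then show ?thesis using True by simp
  next
    case False
    with c have c: "0 < c" by simp
    show ?thesis
    proof (rule order.antisym)
      show "p N (c *\<^sub>R a) \<le> c * p N a"
      proof (rule pleast)
        fix v assume v: "v \<in> V N"
        have "inf (c *\<^sub>R a) v = c *\<^sub>R inf a (inverse c *\<^sub>R v)"
          using scaleR_inf[of c a "inverse c *\<^sub>R v"] c by simp
        then have "?f (inf (c *\<^sub>R a) v) = c * ?f (inf a (inverse c *\<^sub>R v))" by (simp add: blinfun.scaleR_right)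
        moreover have "?f (inf a (inverse c *\<^sub>R v)) \<le> p N a" using Vscale[OF v, of "inverse c"] c by (intro pup) auto
        ultimately show "?f (inf (c *\<^sub>R a) v) \<le> c * p N a" using c by simp
      qed
      have "p N a \<le> p N (c *\<^sub>R a) / c"
      proof (rule pleast)
        fix v assume v: "v \<in> V N"
        have "c *\<^sub>R inf a v = inf (c *\<^sub>R a) (c *\<^sub>R v)" using c by (intro scaleR_inf) simp
        then have "c * ?f (inf a v) = ?f (inf (c *\<^sub>R a) (c *\<^sub>R v))" by (metis blinfun.scaleR_right real_scaleR_def)
        also have "\<dots> \<le> p N (c *\<^sub>R a)" using Vscale[OF v, of c] c by (intro pup) auto
        finally show "?f (inf a v) \<le> p N (c *\<^sub>R a) / c" using c by (simp add: le_divide_eq mult.commute)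
      qed
      then show "c * p N a \<le> p N (c *\<^sub>R a)" using c by (simp add: le_divide_eq mult.commute)
    qed
  qed
  have pbnd: "\<bar>p N a\<bar> \<le> norm phi * norm a" if a: "0 \<le> a" for N a
  proof -
    have "\<bar>p N a\<bar> = p N a" using p0[OF a] by simp
    also have "\<dots> \<le> ?f a" by (rule pley)
    also have "\<dots> \<le> norm phi * norm a" using norm_blinfun[of phi a] by simp
    finally show ?thesis .
  qed
  have exh: "\<exists>h. \<forall>a. 0 \<le> a \<longrightarrow> blinfun_apply h a = p N a" for N
    by (rule cone_ext[OF padd phom pbnd]) auto
  define psi where "psi N = (SOME h. \<forall>a. 0 \<le> a \<longrightarrow> blinfun_apply h a = p N a)" for N
  have psi: "0 \<le> a \<Longrightarrow> blinfun_apply (psi N) a = p N a" for N a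
    using someI_ex[OF exh[of N]] unfolding psi_def by blast
  have pmono: "p N' y \<le> p N y" if "N \<le> N'" for N N' y
  proof (rule pleast)
    fix v assume "v \<in> V N'"
    then obtain t K where v: "v = t *\<^sub>R Sg {N'..<N'+K}" "0 \<le> t" unfolding V_def by auto
    have "v \<le> t *\<^sub>R Sg {N..<N + (N' + K - N)}" unfolding v using v that
      by (intro scaleR_left_mono Sgmono) auto
    moreover have "t *\<^sub>R Sg {N..<N + (N' + K - N)} \<in> V N" unfolding V_def using v by auto
    ultimately show "?f (inf y v) \<le> p N y" by (meson fmono inf_mono order_refl pup order_trans)
  qed
  have tail0: "(\<lambda>N. p N y) \<longlonglongrightarrow> 0" if y: "0 \<le> y" for y
  proof -
    define R where "R K = (SUP t\<in>{0::real..}. ?f (inf y (t *\<^sub>R Sg {..<K})))" for K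
    have bddR: "bdd_above ((\<lambda>t. ?f (inf y (t *\<^sub>R Sg {..<K}))) ` {0..})" for K
      by (rule bdd_aboveI2[of _ _ "?f y"]) (rule fmono, simp)
    have Rup: "0 \<le> t \<Longrightarrow> ?f (inf y (t *\<^sub>R Sg {..<K})) \<le> R K" for t K
      unfolding R_def by (rule cSUP_upper[OF _ bddR]) simp
    have Rleast: "(\<And>t. 0 \<le> t \<Longrightarrow> ?f (inf y (t *\<^sub>R Sg {..<K})) \<le> m) \<Longrightarrow> R K \<le> m" for K m
      unfolding R_def by (rule cSUP_least) auto
    have Rle: "R K \<le> ?f y" for K by (rule Rleast) (rule fmono, simp)
    have Rinc: "incseq R"
    proof (rule incseq_SucI)
      fix K
      show "R K \<le> R (Suc K)"
      proof (rule Rleast)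
        fix t :: real assume t: "0 \<le> t"
        have "?f (inf y (t *\<^sub>R Sg {..<K})) \<le> ?f (inf y (t *\<^sub>R Sg {..<Suc K}))"
          using t by (intro fmono inf_mono scaleR_left_mono Sgmono) auto
        also have "\<dots> \<le> R (Suc K)" using t by (rule Rup)
        finally show "?f (inf y (t *\<^sub>R Sg {..<K})) \<le> R (Suc K)" .
      qed
    qed
    have bddRr: "bdd_above (range R)" using Rle by (intro bdd_aboveI2) auto
    have Rlim: "R \<longlonglongrightarrow> (SUP i. R i)" by (rule LIMSEQ_incseq_SUP[OF bddRr Rinc])
    have key: "p N y \<le> (SUP i. R i) - R N" for N
    proof -
      have "R N \<le> (SUP i. R i) - p N y"
      proof (rule Rleast)
        fix t :: real assume t: "0 \<le> t"
        have "p N y \<le> (SUP i. R i) - ?f (inf y (t *\<^sub>R Sg {..<N}))"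
        proof (rule pleast)
          fix v assume "v \<in> V N"
          then obtain t2 K where v: "v = t2 *\<^sub>R Sg {N..<N+K}" "0 \<le> t2" unfolding V_def by auto
          define a where "a = inf y (t *\<^sub>R Sg {..<N})"
          define b where "b = inf y v"
          let ?T = "max t t2"
          have a0: "0 \<le> a" unfolding a_def using y t Sg0 by (simp add: scaleR_nonneg_nonneg)
          have b0: "0 \<le> b" unfolding b_def using y v Sg0 by (simp add: scaleR_nonneg_nonneg)
          have dSg: "inf (Sg {..<N}) (Sg {N..<N+K}) = 0" unfolding Sg_def
            by (rule disj_sums) (auto intro: zdisj zpos)
          have "inf a b \<le> inf (t *\<^sub>R Sg {..<N}) (t2 *\<^sub>R Sg {N..<N+K})"
            unfolding a_def b_def v by (intro inf_mono) auto
          also have "\<dots> = 0" using dSg Sg0 t v by (intro disj_scale) auto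
          finally have ab: "inf a b = 0" using a0 b0 by (intro order.antisym) auto
          have "a + b = sup a b" using ab by (rule disj_add_sup)
          also have "\<dots> \<le> inf y (?T *\<^sub>R Sg {..<N+K})"
          proof -
            have "t *\<^sub>R Sg {..<N} \<le> ?T *\<^sub>R Sg {..<N+K}"
              using t Sg0 by (meson Sgmono finite_lessThan lessThan_subset_iff le_add1 max.cobounded1
                  order_trans scaleR_left_mono scaleR_right_mono)
            moreover have "t2 *\<^sub>R Sg {N..<N+K} \<le> ?T *\<^sub>R Sg {..<N+K}"
            proof -
              have "Sg {N..<N+K} \<le> Sg {..<N+K}" by (rule Sgmono) auto
              then show ?thesis using v Sg0
                by (meson max.cobounded2 order_trans scaleR_left_mono scaleR_right_mono)
            qed
            ultimately show ?thesis unfolding a_def b_def v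
              by (intro sup_least le_infI) (auto intro: order_trans[OF inf_le2])
          qed
          finally have "?f (a + b) \<le> ?f (inf y (?T *\<^sub>R Sg {..<N+K}))" by (rule fmono)
          also have "\<dots> \<le> R (N + K)" using t v by (intro Rup) auto
          also have "\<dots> \<le> (SUP i. R i)" by (rule cSUP_upper[OF _ bddRr]) simp
          finally have "?f a + ?f b \<le> (SUP i. R i)" by (simp add: blinfun.add_right)
          then show "?f (inf y v) \<le> (SUP i. R i) - ?f (inf y (t *\<^sub>R Sg {..<N}))"
            unfolding a_def b_def by simp
        qed
        then show "?f (inf y (t *\<^sub>R Sg {..<N})) \<le> (SUP i. R i) - p N y" by simp
      qed
      then show ?thesis by simp
    qed
    have "(\<lambda>N. (SUP i. R i) - R N) \<longlonglongrightarrow> (SUP i. R i) - (SUP i. R i)"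
      by (intro tendsto_diff tendsto_const Rlim)
    then have up0: "(\<lambda>N. (SUP i. R i) - R N) \<longlonglongrightarrow> 0" by simp
    show ?thesis
      by (rule tendsto_sandwich[OF _ _ tendsto_const up0]) (use p0[OF y] key in auto)
  qed
  define D where "D = psi ` {j0..}"
  have "D \<noteq> {} \<and> (\<forall>f\<in>D. \<forall>g\<in>D. \<exists>h\<in>D. dual_le h f \<and> dual_le h g) \<and>
        (\<forall>f\<in>D. dual_le 0 f) \<and> (\<forall>h. (\<forall>f\<in>D. dual_le h f) \<longrightarrow> dual_le h 0)"
  proof (intro conjI)
    show "D \<noteq> {}" unfolding D_def by auto
    show "\<forall>f\<in>D. \<forall>g\<in>D. \<exists>h\<in>D. dual_le h f \<and> dual_le h g"
    proof (intro ballI)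
      fix f g assume "f \<in> D" "g \<in> D"
      then obtain N N' where N: "f = psi N" "j0 \<le> N" and N': "g = psi N'" "j0 \<le> N'" unfolding D_def by auto
      have "psi (max N N') \<in> D" unfolding D_def using N by auto
      moreover have "dual_le (psi (max N N')) f" "dual_le (psi (max N N')) g"
        unfolding dual_le_def N N' using psi pmono by auto
      ultimately show "\<exists>h\<in>D. dual_le h f \<and> dual_le h g" by blast
    qed
    show "\<forall>f\<in>D. dual_le 0 f" unfolding D_def dual_le_def using psi p0 by auto
    show "\<forall>h. (\<forall>f\<in>D. dual_le h f) \<longrightarrow> dual_le h 0"
    proof (intro allI impI)
      fix h assume hD: "\<forall>f\<in>D. dual_le h f"
      show "dual_le h 0" unfolding dual_le_def
      proof (intro allI impI)
        fix y :: 'a assume y: "0 \<le> y"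
        have "eventually (\<lambda>N. blinfun_apply h y \<le> p N y) sequentially"
          using eventually_ge_at_top[of j0]
        proof eventually_elim
          case (elim N)
          then have "psi N \<in> D" unfolding D_def by auto
          with hD y have "blinfun_apply h y \<le> blinfun_apply (psi N) y" unfolding dual_le_def by auto
          then show ?case using psi[OF y] by simp
        qed
        then have "blinfun_apply h y \<le> 0"
          using tendsto_le[OF trivial_limit_sequentially tail0[OF y] tendsto_const] by simp
        then show "blinfun_apply h y \<le> blinfun_apply 0 y" by simp
      qed
    qed
  qed
  then have "\<forall>e>0. \<exists>f\<in>D. norm f < e" using OC unfolding dual_norm_order_continuous_def by blast
  then obtain f where f: "f \<in> D" "norm f < dl / M" using dl M by (meson divide_pos_pos)
  then obtain N where N: "f = psi N" "j0 \<le> N" unfolding D_def by auto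
  have "dl \<le> ?f (z N)" using big N(2) by simp
  also have "?f (z N) \<le> p N (z N)"
  proof -
    have "1 *\<^sub>R Sg {N..<N+1} \<in> V N" unfolding V_def
      by (rule CollectI) (rule exI[of _ 1], rule exI[of _ 1], simp)
    moreover have "Sg {N..<N+1} = z N" unfolding Sg_def by simp
    ultimately show ?thesis using pup[of "z N" N "z N"] by simp
  qed
  also have "\<dots> = blinfun_apply f (z N)" using psi[OF zpos] N by simp
  also have "\<dots> \<le> norm f * norm (z N)" using norm_blinfun[of f "z N"] by simp
  also have "\<dots> \<le> norm f * M" using zM[of N] by (intro mult_left_mono) auto
  also have "\<dots> < dl / M * M" using f(2) M by (intro mult_strict_right_mono) auto
  finally show False using M by simp
qed

lemma neg_le_add: "- (x::'a::ordered_ab_group_add) \<le> l \<Longrightarrow> 0 \<le> l + x"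
proof -
  assume "- x \<le> l"
  from add_right_mono[OF this, of x] show ?thesis by simp
qed

lemma oc_imp_dp:
  assumes OC: "dual_norm_order_continuous TYPE('a::banach_lattice)"
  shows "\<forall>T::'a \<Rightarrow> nat \<Rightarrow> real. positive_l1_operator T \<longrightarrow> uaw_DP_l1 T"
proof (intro allI impI)
  fix T :: "'a \<Rightarrow> nat \<Rightarrow> real"
  assume Tp: "positive_l1_operator T"
  have summ: "summable (\<lambda>n. \<bar>T x n\<bar>)" for x using Tp unfolding positive_l1_operator_def l1_operator_def by blast
  have Tadd: "T (x + y) = (\<lambda>n. T x n + T y n)" for x y using Tp unfolding positive_l1_operator_def l1_operator_def by blast
  have Tscale: "T (c *\<^sub>R x) = (\<lambda>n. c * T x n)" for c x using Tp unfolding positive_l1_operator_def l1_operator_def by blast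
  obtain C where C: "\<And>x. l1norm (T x) \<le> C * norm x" using Tp unfolding positive_l1_operator_def l1_operator_def by blast
  have Tpos: "0 \<le> x \<Longrightarrow> 0 \<le> T x n" for x n using Tp unfolding positive_l1_operator_def by blast
  have Tdiff: "T (a - b) n = T a n - T b n" for a b n
  proof -
    have "a - b = a + (-1) *\<^sub>R b" by simp
    then have "T (a - b) = (\<lambda>n. T a n + (-1) * T b n)" by (simp only: Tadd Tscale)
    then show ?thesis by simp
  qed
  have summ': "summable (T x)" for x by (rule summable_rabs_cancel[OF summ])
  define phi0 where "phi0 y = suminf (T y)" for y
  have lin: "bounded_linear phi0"
  proof (rule bounded_linear_intro)
    show "phi0 (x + y) = phi0 x + phi0 y" for x y unfolding phi0_def Tadd by (rule suminf_add[OF summ' summ', symmetric])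
    show "phi0 (r *\<^sub>R x) = r *\<^sub>R phi0 x" for r x unfolding phi0_def Tscale by (simp add: suminf_mult summ')
    show "norm (phi0 x) \<le> norm x * C" for x
    proof -
      have "norm (phi0 x) \<le> (\<Sum>n. \<bar>T x n\<bar>)" unfolding phi0_def using summable_rabs[OF summ] by simp
      also have "\<dots> \<le> C * norm x" using C unfolding l1norm_def .
      finally show ?thesis by (simp add: mult.commute)
    qed
  qed
  define phi where "phi = Blinfun phi0"
  have phiap: "blinfun_apply phi y = suminf (T y)" for y unfolding phi_def bounded_linear_Blinfun_apply[OF lin] phi0_def ..
  have phipos: "posf phi" unfolding posf_def phiap using summ' Tpos by (auto intro: suminf_nonneg)
  have l1le: "l1norm (T x) \<le> blinfun_apply phi (lmod x)" for x
  proof -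
    have "\<bar>T x n\<bar> \<le> T (lmod x) n" for n
    proof -
      have "0 \<le> T (lmod x - x) n" using x_le_lmod[of x] by (intro Tpos) simp
      moreover have "0 \<le> T (lmod x - (- x)) n" using neg_le_add[OF mx_le_lmod[of x]] by (intro Tpos) simp
      moreover have "T (- x) n = - T x n" using Tscale[of "-1" x] by simp
      ultimately show ?thesis unfolding Tdiff by simp
    qed
    then show ?thesis unfolding l1norm_def phiap by (intro suminf_le summ summ')
  qed
  have l1pos: "0 \<le> l1norm (T x)" for x unfolding l1norm_def by (intro suminf_nonneg summ) simp
  show "uaw_DP_l1 T" unfolding uaw_DP_l1_def
  proof (intro allI impI)
    fix x :: "nat \<Rightarrow> 'a"
    assume "bounded (range x) \<and> uaw_null x"
    then have bx: "bounded (range x)" and ux: "uaw_null x" by auto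
    obtain M0 where M0: "\<And>n. norm (x n) \<le> M0" using bx unfolding bounded_iff by blast
    define M where "M = max M0 1"
    have M: "0 < M" "\<And>n. norm (x n) \<le> M" unfolding M_def using M0 by (auto intro: le_max_iff_disj[THEN iffD2])
    have uphi: "(\<lambda>n. blinfun_apply phi (inf (lmod (x n)) u)) \<longlonglongrightarrow> 0" if "0 \<le> u" for u
      using ux that unfolding uaw_null_def by blast
    have "(\<lambda>n. blinfun_apply phi (lmod (x n))) \<longlonglongrightarrow> 0"
    proof (rule ccontr)
      assume nl: "\<not> ?thesis"
      have phil0: "0 \<le> blinfun_apply phi (lmod (x n))" for n using phipos lmod_ge0 unfolding posf_def by blast
      from nl obtain dl where dl: "0 < dl" and r2: "\<forall>no. \<exists>n\<ge>no. \<not> norm (blinfun_apply phi (lmod (x n)) - 0) < dl"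
        unfolding LIMSEQ_iff by blast
      have freq: "\<exists>n\<ge>N. dl \<le> blinfun_apply phi (lmod (x n))" for N
      proof -
        from r2 obtain n where "n \<ge> N" "\<not> norm (blinfun_apply phi (lmod (x n)) - 0) < dl" by blast
        with phil0[of n] show ?thesis by auto
      qed
      have pick: "\<exists>n. dl \<le> blinfun_apply phi (lmod (x n)) \<and> blinfun_apply phi (inf (lmod (x n)) u) < eta"
        if u: "0 \<le> u" and eta: "0 < eta" for u eta
      proof -
        have "eventually (\<lambda>n. blinfun_apply phi (inf (lmod (x n)) u) < eta) sequentially"
          using order_tendstoD(2)[OF uphi[OF u] eta] .
        then obtain N where N: "\<And>n. n \<ge> N \<Longrightarrow> blinfun_apply phi (inf (lmod (x n)) u) < eta"
          unfolding eventually_sequentially by blast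
        obtain n where "n \<ge> N" "dl \<le> blinfun_apply phi (lmod (x n))" using freq by blast
        with N show ?thesis by blast
      qed
      define P :: "nat \<Rightarrow> 'a \<times> 'a \<Rightarrow> bool" where
        "P = (\<lambda>j (y, S). 0 \<le> y \<and> norm y \<le> M \<and> dl \<le> blinfun_apply phi y \<and>
           blinfun_apply phi (inf y ((4::real)^j *\<^sub>R S)) < inverse (real (Suc j)) \<and> 0 \<le> S \<and> (j = 0 \<longrightarrow> S = 0))"
      define Q :: "nat \<Rightarrow> 'a \<times> 'a \<Rightarrow> 'a \<times> 'a \<Rightarrow> bool" where
        "Q = (\<lambda>j (y, S) (y', S'). S' = S + y)"
      have start: "\<exists>st. P 0 st"
      proof -
        obtain n where n: "dl \<le> blinfun_apply phi (lmod (x n))" "blinfun_apply phi (inf (lmod (x n)) 0) < 1"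
          using pick[of 0 1] by auto
        have "P 0 (lmod (x n), 0)" unfolding P_def using n lmod_ge0[of "x n"] M(2)[of n]
          by (simp add: norm_lmod)
        then show ?thesis by blast
      qed
      have step: "\<exists>st'. P (Suc j) st' \<and> Q j st st'" if "P j st" for j st
      proof -
        obtain y S where st: "st = (y, S)" by (metis prod.exhaust)
        from that have y: "0 \<le> y" and S: "0 \<le> S" unfolding st P_def by auto
        define S' where "S' = S + y"
        have S': "0 \<le> S'" unfolding S'_def using y S by simp
        define u where "u = (4::real)^(Suc j) *\<^sub>R S'"
        have u: "0 \<le> u" unfolding u_def using S' by (intro scaleR_nonneg_nonneg) auto
        obtain n where n: "dl \<le> blinfun_apply phi (lmod (x n))"
          "blinfun_apply phi (inf (lmod (x n)) u) < inverse (real (Suc (Suc j)))"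
          using pick[OF u, of "inverse (real (Suc (Suc j)))"] by auto
        have "P (Suc j) (lmod (x n), S')" unfolding P_def using n lmod_ge0[of "x n"] M(2)[of n] S'
          unfolding u_def by (simp add: norm_lmod)
        moreover have "Q j st (lmod (x n), S')" unfolding Q_def st S'_def by simp
        ultimately show ?thesis by blast
      qed
      obtain st where st: "\<And>j. P j (st j) \<and> Q j (st j) (st (Suc j))"
        using dependent_nat_choice[of P Q, OF start step] by blast
      define Y where "Y j = fst (st j)" for j
      define S where "S j = snd (st j)" for j
      have Pj: "P j (Y j, S j)" for j using st[of j] unfolding Y_def S_def by simp
      have Qj: "Q j (Y j, S j) (Y (Suc j), S (Suc j))" for j using st[of j] unfolding Y_def S_def by simp
      have Y0: "0 \<le> Y j" and YM: "norm (Y j) \<le> M" and Ydl: "dl \<le> blinfun_apply phi (Y j)"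
        and YS: "blinfun_apply phi (inf (Y j) ((4::real)^j *\<^sub>R S j)) < inverse (real (Suc j))" for j
        using Pj[of j] unfolding P_def by auto
      have Szero: "S 0 = 0" using Pj[of 0] unfolding P_def by auto
      have Srec: "S (Suc j) = S j + Y j" for j using Qj[of j] unfolding Q_def by auto
      have Ssum: "S j = (\<Sum>k<j. Y k)" for j by (induction j) (auto simp: Szero Srec)
      define s where "s = (\<Sum>k. (1/2::real)^k *\<^sub>R Y k)"
      define W where "W n = (4::real)^n *\<^sub>R (\<Sum>k<n. Y k)" for n
      define z where "z n = sup (Y n - (W n + (1/2::real)^n *\<^sub>R s)) 0" for n
      note dj = disjointify[of Y M, OF Y0 YM, folded s_def, folded W_def, folded z_def]
      define LB where "LB j = dl - inverse (real (Suc j)) - (1/2::real)^j * blinfun_apply phi s" for j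
      have LBle: "LB j \<le> blinfun_apply phi (z j)" for j
      proof -
        have WS: "W j = (4::real)^j *\<^sub>R S j" unfolding W_def Ssum ..
        have "blinfun_apply phi (inf (Y j) (W j + (1/2::real)^j *\<^sub>R s))
            \<le> blinfun_apply phi (inf (Y j) (W j) + (1/2::real)^j *\<^sub>R s)"
          by (rule posf_mono[OF phipos dj(6)])
        also have "\<dots> = blinfun_apply phi (inf (Y j) (W j)) + (1/2::real)^j * blinfun_apply phi s"
          by (simp add: blinfun.add_right blinfun.scaleR_right)
        also have "\<dots> \<le> inverse (real (Suc j)) + (1/2::real)^j * blinfun_apply phi s"
          using YS[of j] unfolding WS by simp
        finally have A: "blinfun_apply phi (inf (Y j) (W j + (1/2::real)^j *\<^sub>R s))
            \<le> inverse (real (Suc j)) + (1/2::real)^j * blinfun_apply phi s" .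
        have Fz: "blinfun_apply phi (z j) = blinfun_apply phi (Y j)
            - blinfun_apply phi (inf (Y j) (W j + (1/2::real)^j *\<^sub>R s))"
          by (subst dj(5)[of j]) (rule blinfun.diff_right)
        show ?thesis unfolding LB_def using A Fz Ydl[of j] by simp
      qed
      have "LB \<longlonglongrightarrow> dl - 0 - 0 * blinfun_apply phi s"
        unfolding LB_def
        by (intro tendsto_diff tendsto_mult tendsto_const LIMSEQ_inverse_real_of_nat LIMSEQ_power_zero) simp
      then have "LB \<longlonglongrightarrow> dl" by simp
      then have "eventually (\<lambda>j. dl / 2 < LB j) sequentially" using dl by (intro order_tendstoD(1)) auto
      then obtain j0 where j0: "\<And>j. j \<ge> j0 \<Longrightarrow> dl / 2 < LB j" unfolding eventually_sequentially by blast
      show False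
      proof (rule tail_contra[OF phipos dj(2) dj(4)])
        show "norm (z n) \<le> M" for n using norm_mono_pos[OF dj(2) dj(3), of n] YM[of n] by simp
        show "0 < M" by (rule M(1))
        show "0 < dl / 2" using dl by simp
        show "dl / 2 \<le> blinfun_apply phi (z n)" if "j0 \<le> n" for n using j0[OF that] LBle[of n] by simp
        show "dual_norm_order_continuous TYPE('a)" by (rule OC)
      qed
    qed
    note lim = this
    show "(\<lambda>n. l1norm (T (x n))) \<longlonglongrightarrow> 0"
      by (rule tendsto_sandwich[OF _ _ tendsto_const lim]) (use l1pos l1le in auto)
  qed
qed

theorem theorem3p3:
  shows "(\<forall>T::'a::banach_lattice \<Rightarrow> nat \<Rightarrow> real. positive_l1_operator T \<longrightarrow> uaw_DP_l1 T)
         \<longleftrightarrow> dual_norm_order_continuous TYPE('a)"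
  using dp_imp_oc oc_imp_dp by blast

end
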